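(* For each $n$, let $G_s(\alpha,k)$ be a uniform random temporal star on a star with $n$ vertices, where $\alpha=\alpha(n)$ and $k=k(n)$ satisfy $\alpha\ge 2n$ and $k\ge 6n\ln n$. Then the probability that $G_s(\alpha,k)$ is explorable (all its edges can be explored) tends to $1$ as $n\to\infty$.
   Context: A uniform random temporal star $G_s(\alpha,k)$: take a star $G_s$ with center $c$ and $n-1$ leaves; each edge independently receives $k$ labels, each chosen independently and uniformly at random from $\{1,2,\dots,\alpha\}$ (labels are the discrete times at which the edge is available). A journey is a sequence of time edges $(u,u_1,l_1),(u_1,u_2,l_2),\dots$, each $l_t$ a label of the edge traversed, with strictly increasing labels. The temporal star is explorable if there is a journey starting and ending at $c$ that visits every vertex. *)

theory Defs
  imports "HOL-Probability.Probability"
begin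

text \<open>Star on n vertices: center 0, leaves 1..n-1. A labelling L assigns to leaf i
  (i.e. edge {0,i}) its k labels L i 0, ..., L i (k-1), each in {1..alpha}.\<close>

definition star_edge :: "nat \<Rightarrow> nat \<Rightarrow> nat \<Rightarrow> bool" where
  "star_edge n u v \<longleftrightarrow> (u = 0 \<and> 1 \<le> v \<and> v < n) \<or> (v = 0 \<and> 1 \<le> u \<and> u < n)"

definition edge_labels :: "nat \<Rightarrow> (nat \<Rightarrow> nat \<Rightarrow> nat) \<Rightarrow> nat \<Rightarrow> nat \<Rightarrow> nat set" where
  "edge_labels k L u v = {L (max u v) j | j. j < k}"

definition is_journey :: "nat \<Rightarrow> nat \<Rightarrow> (nat \<Rightarrow> nat \<Rightarrow> nat) \<Rightarrow> (nat \<times> nat \<times> nat) list \<Rightarrow> bool" where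
  "is_journey n k L J \<longleftrightarrow>
     (\<forall>(u, v, l) \<in> set J. star_edge n u v \<and> l \<in> edge_labels k L u v) \<and>
     (\<forall>t. Suc t < length J \<longrightarrow> fst (snd (J ! t)) = fst (J ! Suc t)) \<and>
     sorted_wrt (<) (map (\<lambda>(u, v, l). l) J)"

definition journey_vertices :: "(nat \<times> nat \<times> nat) list \<Rightarrow> nat set" where
  "journey_vertices J = {fst e | e. e \<in> set J} \<union> {fst (snd e) | e. e \<in> set J}"

definition explorable :: "nat \<Rightarrow> nat \<Rightarrow> (nat \<Rightarrow> nat \<Rightarrow> nat) \<Rightarrow> bool" where
  "explorable n k L \<longleftrightarrow> (\<exists>J. J \<noteq> [] \<and> is_journey n k L J \<and> fst (hd J) = 0 \<and>
       fst (snd (last J)) = 0 \<and> {0..<n} \<subseteq> journey_vertices J)"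

definition labellings :: "nat \<Rightarrow> nat \<Rightarrow> nat \<Rightarrow> (nat \<Rightarrow> nat \<Rightarrow> nat) set" where
  "labellings n alpha k = {L. \<forall>i j. (if 1 \<le> i \<and> i < n \<and> j < k then L i j \<in> {1..alpha} else L i j = 0)}"

text \<open>Uniform random temporal star: uniform distribution on labellings
  (equivalently, all labels independent and uniform in {1..alpha}).\<close>
definition uniform_random_temporal_star :: "nat \<Rightarrow> nat \<Rightarrow> nat \<Rightarrow> (nat \<Rightarrow> nat \<Rightarrow> nat) pmf" where
  "uniform_random_temporal_star n alpha k = pmf_of_set (labellings n alpha k)"

end

theory Submission
  imports Defs "HOL-Real_Asymp.Real_Asymp"
begin


definition blk :: "nat \<Rightarrow> nat \<Rightarrow> nat set" where
  "blk b t = {t * b + 1 .. (t + 1) * b}"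

lemma explorable_if:
  assumes n: "n \<ge> 2"
    and hit: "\<And>t. t < 2*(n-1) \<Longrightarrow> \<exists>j<k. L (t div 2 + 1) j \<in> blk s t"
  shows "explorable n k L"
proof -
  define m where "m = n - 1"
  have m: "m \<ge> 1" "n = m + 1" using n by (auto simp: m_def)
  define jj where "jj t = (SOME j. j < k \<and> L (t div 2 + 1) j \<in> blk s t)" for t
  have jj: "jj t < k \<and> L (t div 2 + 1) (jj t) \<in> blk s t" if "t < 2*m" for t
    unfolding jj_def by (rule someI_ex) (use hit that m_def in auto)
  define g where "g t = L (t div 2 + 1) (jj t)" for t
  define e where "e t = (if even t then (0, t div 2 + 1, g t) else (t div 2 + 1, 0, g t))" for t
  define J where "J = map e [0..<2*m]"
  have lenJ: "length J = 2*m" by (simp add: J_def)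
  have Jnth: "J ! t = e t" if "t < 2*m" for t using that by (simp add: J_def)
  have gmono: "g t < g t'" if "t < t'" "t' < 2*m" for t t'
  proof -
    have "g t \<le> (t+1) * s" using jj[of t] that by (auto simp: g_def blk_def)
    also have "\<dots> \<le> t' * s" using that by (intro mult_right_mono) auto
    also have "\<dots> < g t'" using jj[of t'] that by (auto simp: g_def blk_def)
    finally show ?thesis .
  qed
  have "J \<noteq> []" using m by (simp add: J_def)
  moreover have "is_journey n k L J"
    unfolding is_journey_def
  proof (intro conjI allI impI)
    show "\<forall>(u, v, l)\<in>set J. star_edge n u v \<and> l \<in> edge_labels k L u v"
    proof
      fix x assume "x \<in> set J"
      then obtain t where t: "t < 2*m" and x: "x = e t" by (auto simp: J_def)
      have "t div 2 + 1 < n" using t m by auto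
      then show "case x of (u, v, l) \<Rightarrow> star_edge n u v \<and> l \<in> edge_labels k L u v"
        using jj[OF t] unfolding x by (auto simp: e_def star_edge_def edge_labels_def g_def)
    qed
  next
    fix t assume "Suc t < length J"
    then show "fst (snd (J ! t)) = fst (J ! Suc t)"
      using lenJ by (auto simp: Jnth e_def elim: oddE)
  next
    show "sorted_wrt (<) (map (\<lambda>(u, v, l). l) J)"
      unfolding J_def map_map sorted_wrt_map
      by (rule sorted_wrt_mono_rel[OF _ sorted_wrt_upt]) (auto simp: e_def gmono)
  qed
  moreover have "fst (hd J) = 0" using m by (simp add: J_def e_def upt_conv_Cons)
  moreover have "fst (snd (last J)) = 0"
  proof -
    have "last J = J ! (2*m - 1)" using lenJ m \<open>J \<noteq> []\<close> by (simp add: last_conv_nth)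
    also have "\<dots> = e (2*m-1)" using m by (simp add: Jnth)
    finally show ?thesis using m by (simp add: e_def)
  qed
  moreover have "{0..<n} \<subseteq> journey_vertices J"
  proof
    fix v assume v: "v \<in> {0..<n}"
    show "v \<in> journey_vertices J"
    proof (cases "v = 0")
      case True
      have "e 0 \<in> set J" using m by (simp add: J_def)
      then show ?thesis using True unfolding journey_vertices_def by (force simp: e_def)
    next
      case False
      then have t: "2*(v-1) < 2*m" using v m by auto
      then have "e (2*(v-1)) \<in> set J" by (simp add: J_def)
      moreover have "fst (snd (e (2*(v-1)))) = v" using False by (simp add: e_def)
      ultimately show ?thesis unfolding journey_vertices_def by (intro UnI2 CollectI exI[of _ "e (2*(v-1))"]) simp
    qed
  qed
  ultimately show ?thesis unfolding explorable_def by blast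
qed



lemma uniform_eq:
  assumes "alpha \<ge> 1"
  shows "uniform_random_temporal_star n alpha k =
    map_pmf (\<lambda>f i j. f (i,j)) (Pi_pmf ({1..<n}\<times>{..<k}) 0 (\<lambda>_. pmf_of_set {1..alpha}))"
proof -
  define D where "D = {1..<n}\<times>{..<k}"
  have fin: "finite D" by (simp add: D_def)
  have "Pi_pmf D 0 (\<lambda>_. pmf_of_set {1..alpha}) = pmf_of_set (PiE_dflt D 0 (\<lambda>_. {1..alpha}))"
    using assms fin by (intro Pi_pmf_of_set) auto
  moreover have "map_pmf (\<lambda>f i j. f (i,j)) (pmf_of_set (PiE_dflt D 0 (\<lambda>_. {1..alpha})))
      = pmf_of_set ((\<lambda>f i j. f (i,j)) ` PiE_dflt D 0 (\<lambda>_. {1..alpha}))"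
  proof (rule map_pmf_of_set_inj)
    show "inj_on (\<lambda>f i j. f (i, j)) (PiE_dflt D 0 (\<lambda>_. {1..alpha}))"
      by (auto simp: inj_on_def fun_eq_iff)
    show "PiE_dflt D 0 (\<lambda>_. {1..alpha}) \<noteq> {}" using assms by simp
    show "finite (PiE_dflt D 0 (\<lambda>_. {1..alpha}))" using fin by auto
  qed
  moreover have "(\<lambda>f i j. f (i,j)) ` PiE_dflt D 0 (\<lambda>_. {1..alpha}) = labellings n alpha k"
  proof safe
    fix f assume "f \<in> PiE_dflt D 0 (\<lambda>_. {1..alpha})"
    then show "(\<lambda>i j. f (i, j)) \<in> labellings n alpha k"
      by (auto simp: PiE_dflt_def labellings_def D_def)
  next
    fix L assume L: "L \<in> labellings n alpha k"
    have "case_prod L \<in> PiE_dflt D 0 (\<lambda>_. {1..alpha})"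
    proof -
      have "\<forall>i j. (if 1 \<le> i \<and> i < n \<and> j < k then L i j \<in> {1..alpha} else L i j = 0)"
        using L by (simp add: labellings_def)
      then show ?thesis unfolding PiE_dflt_def D_def
        by (auto split: if_splits)
    qed
    then show "L \<in> (\<lambda>f i j. f (i,j)) ` PiE_dflt D 0 (\<lambda>_. {1..alpha})"
      by (intro image_eqI[of _ _ "case_prod L"]) auto
  qed
  ultimately show ?thesis unfolding uniform_random_temporal_star_def D_def by simp
qed

lemma miss_prob:
  assumes "alpha \<ge> 1" "1 \<le> i" "i < n" "I \<subseteq> {1..alpha}"
  shows "measure_pmf.prob (uniform_random_temporal_star n alpha k) {L. \<forall>j<k. L i j \<notin> I}
         = (1 - real (card I) / real alpha) ^ k"
proof -
  define D where "D = {1..<n}\<times>{..<k}"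
  define Di where "Di = {i}\<times>{..<k}"
  define B where "B x = (if x \<in> Di then -I else UNIV)" for x :: "nat \<times> nat"
  have fin: "finite D" by (simp add: D_def)
  have DiD: "D \<inter> Di = Di" using assms by (auto simp: D_def Di_def)
  have pre: "(\<lambda>f i j. f (i,j)) -` {L. \<forall>j<k. L i j \<notin> I} = Pi D B"
    using assms by (auto simp: Pi_def B_def D_def Di_def)
  have c: "measure_pmf.prob (pmf_of_set {1..alpha}) (-I) = 1 - real (card I) / real alpha"
  proof -
    have "{1..alpha} \<inter> -I = {1..alpha} - I" by auto
    moreover have "card ({1..alpha} - I) = alpha - card I"
      using assms(4) by (subst card_Diff_subset) (auto intro: finite_subset)
    moreover have "card I \<le> alpha" using assms(4) card_mono[of "{1..alpha}" I] by simp
    ultimately show ?thesis using assms(1)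
      by (subst measure_pmf_of_set) (auto simp: field_simps of_nat_diff)
  qed
  have "measure_pmf.prob (uniform_random_temporal_star n alpha k) {L. \<forall>j<k. L i j \<notin> I}
      = (\<Prod>x\<in>D. measure_pmf.prob (pmf_of_set {1..alpha}) (B x))"
    unfolding uniform_eq[OF assms(1)] measure_map_pmf D_def[symmetric] pre
    using fin by (rule measure_Pi_pmf_Pi)
  also have "\<dots> = (\<Prod>x\<in>D. if x \<in> Di then 1 - real (card I) / real alpha else 1)"
    by (intro prod.cong refl) (simp only: B_def c split: if_split, simp)
  also have "\<dots> = (1 - real (card I) / real alpha) ^ k"
    by (subst prod.If_cases[OF fin]) (simp add: DiD, simp add: Di_def card_cartesian_product)
  finally show ?thesis .
qed



lemma prob_bound:
  assumes n: "n \<ge> 2" and a: "a \<ge> 2 * n" and kk: "real kk \<ge> 6 * real n * ln (real n)"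
  shows "measure_pmf.prob (uniform_random_temporal_star n a kk) {L. explorable n kk L}
         \<ge> 1 - 2 * real n * exp (-(3/2) * ln (real n))"
proof -
  define M where "M = uniform_random_temporal_star n a kk"
  define m where "m = n - 1"
  have m: "m \<ge> 1" "n = m + 1" using n by (auto simp: m_def)
  define s where "s = a div (2*m)"
  have s1: "s \<ge> 1"
  proof -
    have "2*m \<le> a" using a m by simp
    then have "(2*m) div (2*m) \<le> a div (2*m)" by (rule div_le_mono)
    then show ?thesis using m by (simp add: s_def)
  qed
  have sa: "2*m * s \<le> a" using div_mult_mod_eq[of a "2*m"] unfolding s_def by (metis le_add1 mult.commute)
  have s4: "a \<le> 4*m * s"
  proof -
    have "a = 2*m * s + a mod (2*m)" by (simp add: s_def)
    moreover have "a mod (2*m) < 2*m" using m by simp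
    moreover have "2*m \<le> 2*m * s" using s1 by simp
    ultimately show ?thesis by linarith
  qed
  define E where "E t = {L. \<forall>j<kk. L (t div 2 + 1) j \<notin> blk s t}" for t
  have sub: "{L. \<not> explorable n kk L} \<subseteq> (\<Union>t\<in>{..<2*m}. E t)"
  proof
    fix L assume L: "L \<in> {L. \<not> explorable n kk L}"
    show "L \<in> (\<Union>t\<in>{..<2*m}. E t)"
    proof (rule ccontr)
      assume "L \<notin> (\<Union>t\<in>{..<2*m}. E t)"
      then have "\<exists>j<kk. L (t div 2 + 1) j \<in> blk s t" if "t < 2*(n-1)" for t
        using that by (auto simp: E_def m_def)
      then have "explorable n kk L" by (rule explorable_if[OF n])
      then show False using L by simp
    qed
  qed
  have a1: "a \<ge> 1" using a n by simp
  have bnd: "measure_pmf.prob M (E t) \<le> exp (-(3/2) * ln (real n))" if t: "t < 2*m" for t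
  proof -
    have blk_sub: "blk s t \<subseteq> {1..a}"
    proof -
      have "(t+1) * s \<le> 2*m * s" using t by (intro mult_right_mono) auto
      then show ?thesis using sa by (auto simp: blk_def)
    qed
    have cb: "card (blk s t) = s" by (simp add: blk_def)
    have "measure_pmf.prob M (E t) = (1 - real s / real a) ^ kk"
      unfolding M_def E_def using miss_prob[OF a1 _ _ blk_sub, of "t div 2 + 1" n kk] t m
      by (simp add: cb)
    also have "\<dots> \<le> exp (- (real s / real a)) ^ kk"
    proof (rule power_mono)
      show "1 - real s / real a \<le> exp (- (real s / real a))"
        using exp_ge_add_one_self[of "- (real s / real a)"] by simp
      have "s \<le> 2*m * s" using m by simp
      then have "s \<le> a" using sa by linarith
      then show "0 \<le> 1 - real s / real a" using a1 by (simp add: field_simps)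
    qed
    also have "\<dots> = exp (- (real kk * real s / real a))"
      by (simp add: exp_of_nat_mult[symmetric])
    also have "\<dots> \<le> exp (-(3/2) * ln (real n))"
    proof -
      have lnn: "ln (real n) \<ge> 0" using n by simp
      have h: "real a \<le> real (4*m * s)" using s4 by (simp only: of_nat_le_iff)
      then have h2: "real a \<le> 4 * real m * real s" by simp
      have q: "real s / real a \<ge> 1 / (4 * real m)"
        using h2 m a1 by (simp add: divide_simps mult.commute mult.left_commute)
      have "real kk * (1 / (4 * real m)) \<le> real kk * (real s / real a)"
        by (intro mult_left_mono q) simp
      moreover have "(3/2) * ln (real n) \<le> real kk * (1 / (4 * real m))"
      proof -
        have "(3/2) * ln (real n) * (4 * real m) \<le> 6 * real n * ln (real n)"
          using lnn m by (simp add: mult_left_mono)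
        also have "\<dots> \<le> real kk" by (rule kk)
        finally show ?thesis using m by (simp add: field_simps)
      qed
      ultimately show ?thesis by simp
    qed
    finally show ?thesis .
  qed
  have "measure_pmf.prob M {L. \<not> explorable n kk L} \<le> measure_pmf.prob M (\<Union>t\<in>{..<2*m}. E t)"
    by (rule measure_pmf.finite_measure_mono[OF sub]) simp
  also have "\<dots> \<le> (\<Sum>t<2*m. measure_pmf.prob M (E t))"
    by (rule measure_pmf.finite_measure_subadditive_finite) auto
  also have "\<dots> \<le> (\<Sum>t<2*m. exp (-(3/2) * ln (real n)))"
    by (intro sum_mono bnd) simp
  also have "\<dots> \<le> 2 * real n * exp (-(3/2) * ln (real n))"
    using m by simp
  finally have "measure_pmf.prob M {L. \<not> explorable n kk L} \<le> 2 * real n * exp (-(3/2) * ln (real n))" .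
  moreover have "measure_pmf.prob M {L. \<not> explorable n kk L} = 1 - measure_pmf.prob M {L. explorable n kk L}"
    using measure_pmf.prob_neg[of M "\<lambda>L. explorable n kk L"] by simp
  ultimately show ?thesis unfolding M_def by simp
qed

theorem theorem7:
  fixes alpha k :: "nat \<Rightarrow> nat"
  assumes "\<And>n. alpha n \<ge> 2 * n"
    and "\<And>n. real (k n) \<ge> 6 * real n * ln (real n)"
  shows "(\<lambda>n. measure_pmf.prob (uniform_random_temporal_star n (alpha n) (k n))
             {L. explorable n (k n) L}) \<longlonglongrightarrow> 1"
proof (rule tendsto_sandwich)
  show "\<forall>\<^sub>F n in sequentially. 1 - 2 * real n * exp (-(3/2) * ln (real n)) \<le>
      measure_pmf.prob (uniform_random_temporal_star n (alpha n) (k n)) {L. explorable n (k n) L}"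
    using eventually_ge_at_top[of 2] by eventually_elim (intro prob_bound assms)
  show "\<forall>\<^sub>F n in sequentially.
      measure_pmf.prob (uniform_random_temporal_star n (alpha n) (k n)) {L. explorable n (k n) L} \<le> 1"
    by simp
  show "(\<lambda>n::nat. 1 - 2 * real n * exp (-(3/2) * ln (real n))) \<longlonglongrightarrow> 1"
    by real_asymp
  show "(\<lambda>n. 1::real) \<longlonglongrightarrow> 1" by simp
qed

end
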